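(* For every integer $n>2$, the number of pairs $(s,t)\in S_n\times S_n$ such that $[s,t]=sts^{-1}t^{-1}$ is a $3$-cycle and $s$ is a cycle (of some length $k\in\{2,\dots,n\}$, i.e. a single cycle together with fixed points) equals $$\#\mathcal{B}_2(n)=\frac{1}{24}(n-1)(n-2)(n^2+5n+12)\,n!.$$
   Context: Permutations compose as functions. *)

theory Defs
  imports "HOL-Combinatorics.Cycles" Complex_Main
begin

definition is_k_cycle :: "nat \<Rightarrow> ('a \<Rightarrow> 'a) \<Rightarrow> bool" where
  "is_k_cycle k p \<longleftrightarrow> (\<exists>cs. distinct cs \<and> length cs = k \<and> p = cycle_of_list cs)"

end

theory Submission
  imports Defs
begin


abbreviation cyc where "cyc \<equiv> cycle_of_list"

lemma cyc_split: "cyc (x # xs @ y # ys) = cyc (x # xs @ [y]) \<circ> cyc (y # ys)"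
proof (induction xs arbitrary: x)
  case Nil show ?case by simp
next
  case (Cons z zs) then show ?case by (simp add: o_assoc)
qed

lemma cyc_snoc: assumes "distinct (x # xs @ [y])"
  shows "cyc (x # xs @ [y]) = Transposition.transpose x y \<circ> cyc (x # xs)"
proof -
  have "cyc (x # xs @ [y]) = cyc (rotate (length (x#xs)) ((x # xs) @ [y]))"
    using cycle_of_list_rotate_independent[OF assms, of "length (x#xs)"] by simp
  also have "rotate (length (x#xs)) ((x # xs) @ [y]) = [y] @ (x#xs)" by (rule rotate_append)
  hence "cyc (rotate (length (x#xs)) ((x # xs) @ [y])) = cyc (y # x # xs)" by simp
  finally show ?thesis by (simp add: transpose_commute)
qed

lemma cyc_merge: assumes "distinct (x # A @ y # B)"
  shows "cyc (x # A @ y # B) = Transposition.transpose x y \<circ> cyc (x # A) \<circ> cyc (y # B)"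
proof -
  have "distinct (x # A @ [y])" using assms by auto
  then show ?thesis using cyc_split[of x A y B] cyc_snoc[of x A y] by simp
qed

lemma cyc3_eq: "cyc [a,b,d] = Transposition.transpose a b \<circ> Transposition.transpose b d"
  by simp

lemma cyc_pow_nth: assumes "distinct L" "i < length L"
  shows "(cyc L ^^ m) (L ! i) = L ! ((m + i) mod length L)"
proof -
  have "map (cyc L ^^ m) L = rotate m L" by (rule cyclic_rotation[OF assms(1)])
  hence "(map (cyc L ^^ m) L) ! i = rotate m L ! i" by simp
  thus ?thesis using assms(2) by (simp add: nth_rotate)
qed

lemma cyc_nth: assumes "distinct L" "i < length L"
  shows "cyc L (L ! i) = L ! (Suc i mod length L)"
  using cyc_pow_nth[OF assms, of 1] by simp

lemma supp_cyc: assumes "distinct L" "2 \<le> length L"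
  shows "{x. cyc L x \<noteq> x} = set L"
proof
  show "{x. cyc L x \<noteq> x} \<subseteq> set L" using id_outside_supp by fastforce
next
  show "set L \<subseteq> {x. cyc L x \<noteq> x}"
  proof
    fix x assume "x \<in> set L"
    then obtain i where i: "i < length L" "x = L ! i" by (auto simp: in_set_conv_nth)
    have ne: "Suc i mod length L \<noteq> i"
    proof (cases "Suc i < length L")
      case True then show ?thesis by simp
    next
      case False then have "Suc i = length L" using i by simp
      then show ?thesis using assms(2) by simp
    qed
    have "Suc i mod length L < length L" using i by (intro mod_less_divisor) linarith
    hence "L ! (Suc i mod length L) \<noteq> L ! i" using ne i assms(1) by (simp add: nth_eq_iff_index_eq)
    thus "x \<in> {x. cyc L x \<noteq> x}" using cyc_nth[OF assms(1) i(1)] i by simp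
  qed
qed

lemma kcyc_card: assumes "is_k_cycle k f" "2 \<le> k"
  shows "finite {x. f x \<noteq> x} \<and> card {x. f x \<noteq> x} = k"
proof -
  obtain cs where cs: "distinct cs" "length cs = k" "f = cyc cs" using assms(1) unfolding is_k_cycle_def by blast
  then have "{x. f x \<noteq> x} = set cs" using supp_cyc[of cs] assms(2) by simp
  thus ?thesis using cs distinct_card by fastforce
qed

lemma kcyc_unique: assumes "is_k_cycle k f" "2 \<le> k" "is_k_cycle m f" "2 \<le> m" shows "k = m"
  using kcyc_card[OF assms(1,2)] kcyc_card[OF assms(3,4)] by simp

lemma kcyc_orbit: assumes "is_k_cycle k f" "2 \<le> k" "f x \<noteq> x" "f y \<noteq> y"
  shows "\<exists>m. (f ^^ m) x = y"
proof -
  obtain cs where cs: "distinct cs" "length cs = k" "f = cyc cs" using assms(1) unfolding is_k_cycle_def by blast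
  then have S: "{x. f x \<noteq> x} = set cs" using supp_cyc[of cs] assms(2) by simp
  have "x \<in> set cs" "y \<in> set cs" using S assms(3,4) by auto
  then obtain i j where i: "i < k" "x = cs ! i" and j: "j < k" "y = cs ! j" using cs(2) by (metis in_set_conv_nth)
  have "(f ^^ (j + k - i)) x = cs ! ((j + k - i + i) mod k)"
    using cyc_pow_nth[OF cs(1), of i "j + k - i"] cs i by simp
  also have "(j + k - i + i) mod k = j" using i j by simp
  finally show ?thesis using j by blast
qed

lemma kcyc_notinv: assumes "is_k_cycle k f" "2 \<le> k" "f ` A \<subseteq> A" "x \<in> A" "y \<notin> A"
   "f x \<noteq> x" "f y \<noteq> y"
  shows False
proof -
  obtain m where m: "(f ^^ m) x = y" using kcyc_orbit[OF assms(1,2,6,7)] by blast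
  have "(f ^^ m') x \<in> A" for m' by (induction m') (use assms(3,4) in auto)
  thus False using m assms(5) by metis
qed

abbreviation tr where "tr \<equiv> Transposition.transpose"

lemma tr_cyc_commute: assumes "u \<notin> set L" "v \<notin> set L"
  shows "tr u v \<circ> cyc L = cyc L \<circ> tr u v"
proof
  fix x
  show "(tr u v \<circ> cyc L) x = (cyc L \<circ> tr u v) x"
  proof (cases "x \<in> set L")
    case True
    then have "cyc L x \<in> set L" using cycle_permutes[of L] by (simp add: permutes_in_image)
    then show ?thesis using True assms by (auto simp: transpose_def)
  next
    case False
    then have "tr u v x \<notin> set L" using assms by (auto simp: transpose_def)
    then show ?thesis using False by (simp add: id_outside_supp)
  qed
qed

lemma tr_tail: "tr u v \<circ> (tr u v \<circ> X) = X"
  by (simp add: fun_eq_iff)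

lemma P3_eq: assumes "distinct (p # A @ q # B @ r # C)"
  shows "cyc [p,q,r] \<circ> cyc (p # A @ q # B @ r # C) = cyc (p # A @ r # C @ q # B)"
proof -
  have d: "p \<noteq> q" "p \<noteq> r" "q \<noteq> r" using assms by auto
  have e1: "cyc (p # A @ q # (B @ r # C)) = tr p q \<circ> (cyc (p # A) \<circ> cyc (q # B @ r # C))"
    using cyc_merge[of p A q "B @ r # C"] assms by (simp add: o_assoc)
  have e2: "cyc (q # B @ r # C) = tr q r \<circ> (cyc (q # B) \<circ> cyc (r # C))"
    using cyc_merge[of q B r C] assms by (simp add: o_assoc)
  have e3: "cyc (p # A @ r # (C @ q # B)) = tr p r \<circ> (cyc (p # A) \<circ> cyc (r # C @ q # B))"
    using cyc_merge[of p A r "C @ q # B"] assms by (auto simp add: o_assoc)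
  have e4: "cyc (r # C @ q # B) = tr r q \<circ> (cyc (r # C) \<circ> cyc (q # B))"
    using cyc_merge[of r C q B] assms by (auto simp add: o_assoc)
  have comm: "cyc (q # B) \<circ> cyc (r # C) = cyc (r # C) \<circ> cyc (q # B)"
    using cycles_commute[of "q # B" "r # C"] assms by auto
  have t3: "tr p q \<circ> (tr q r \<circ> (tr p q \<circ> X)) = tr p r \<circ> X" for X
    using d by (auto simp: fun_eq_iff transpose_def)
  have "cyc [p,q,r] \<circ> cyc (p # A @ q # B @ r # C) =
     tr p q \<circ> (tr q r \<circ> (tr p q \<circ> (cyc (p # A) \<circ> (tr q r \<circ> (cyc (q # B) \<circ> cyc (r # C))))))"
    using e1 e2 by (simp add: o_assoc)
  also have "\<dots> = tr p r \<circ> (cyc (p # A) \<circ> (tr r q \<circ> (cyc (r # C) \<circ> cyc (q # B))))"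
    using t3 comm by (simp add: transpose_commute)
  also have "\<dots> = cyc (p # A @ r # C @ q # B)" using e3 e4 by simp
  finally show ?thesis .
qed

lemma N3_eq: assumes "distinct (p # A @ q # B @ r # C)"
  shows "cyc [p,r,q] \<circ> cyc (p # A @ q # B @ r # C) = cyc (p # A) \<circ> cyc (q # B) \<circ> cyc (r # C)"
proof -
  have d: "p \<noteq> q" "p \<noteq> r" "q \<noteq> r" using assms by auto
  have e1: "cyc (p # A @ q # (B @ r # C)) = tr p q \<circ> (cyc (p # A) \<circ> cyc (q # B @ r # C))"
    using cyc_merge[of p A q "B @ r # C"] assms by (simp add: o_assoc)
  have e2: "cyc (q # B @ r # C) = tr q r \<circ> (cyc (q # B) \<circ> cyc (r # C))"
    using cyc_merge[of q B r C] assms by (simp add: o_assoc)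
  have t3: "tr p r \<circ> (tr r q \<circ> (tr p q \<circ> X)) = tr q r \<circ> X" for X
    using d by (auto simp: fun_eq_iff transpose_def)
  have cm: "tr q r \<circ> cyc (p # A) = cyc (p # A) \<circ> tr q r"
    using assms by (intro tr_cyc_commute) auto
  have "cyc [p,r,q] \<circ> cyc (p # A @ q # B @ r # C) =
     tr p r \<circ> (tr r q \<circ> (tr p q \<circ> (cyc (p # A) \<circ> (tr q r \<circ> (cyc (q # B) \<circ> cyc (r # C))))))"
    using e1 e2 by (simp add: o_assoc)
  also have "\<dots> = tr q r \<circ> (cyc (p # A) \<circ> (tr q r \<circ> (cyc (q # B) \<circ> cyc (r # C))))"
    by (rule t3)
  also have "\<dots> = (tr q r \<circ> cyc (p # A)) \<circ> (tr q r \<circ> (cyc (q # B) \<circ> cyc (r # C)))"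
    by (simp add: o_assoc)
  also have "\<dots> = (cyc (p # A) \<circ> tr q r) \<circ> (tr q r \<circ> (cyc (q # B) \<circ> cyc (r # C)))"
    by (simp only: cm)
  also have "\<dots> = cyc (p # A) \<circ> (tr q r \<circ> (tr q r \<circ> (cyc (q # B) \<circ> cyc (r # C))))"
    by (simp only: o_assoc)
  also have "\<dots> = cyc (p # A) \<circ> cyc (q # B) \<circ> cyc (r # C)"
    by (simp only: tr_tail) (simp add: o_assoc)
  finally show ?thesis .
qed

lemma N2_eq: assumes "distinct (b # X @ a # Y)" "d \<notin> set (b # X @ a # Y)"
  shows "cyc [a,b,d] \<circ> cyc (b # X @ a # Y) = cyc (b # X) \<circ> cyc (a # Y @ [d])"
proof -
  have e1: "cyc (b # (X @ a # Y) @ [d]) = tr b d \<circ> cyc (b # X @ a # Y)"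
    using cyc_snoc[of b "X @ a # Y" d] assms by auto
  have e2: "cyc (b # X @ a # (Y @ [d])) = tr b a \<circ> (cyc (b # X) \<circ> cyc (a # Y @ [d]))"
    using cyc_merge[of b X a "Y @ [d]"] assms by (auto simp add: o_assoc)
  have "cyc [a,b,d] \<circ> cyc (b # X @ a # Y) = tr a b \<circ> (tr b d \<circ> cyc (b # X @ a # Y))"
    by (simp add: o_assoc)
  also have "\<dots> = tr a b \<circ> (tr b a \<circ> (cyc (b # X) \<circ> cyc (a # Y @ [d])))"
    using e1 e2 by simp
  also have "\<dots> = cyc (b # X) \<circ> cyc (a # Y @ [d])"
    by (simp only: transpose_commute[of b a] tr_tail)
  finally show ?thesis .
qed

lemma N1_eq: assumes "distinct (a # R)" "b \<notin> set (a # R)" "d \<notin> set (a # R)" "b \<noteq> d"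
  shows "cyc [a,b,d] \<circ> cyc (a # R) = cyc (a # R @ [b,d])"
proof -
  have e1: "cyc (a # R @ b # [d]) = tr a b \<circ> (cyc (a # R) \<circ> cyc [b, d])"
    using cyc_merge[of a R b "[d]"] assms by (auto simp add: o_assoc)
  have cm: "tr b d \<circ> cyc (a # R) = cyc (a # R) \<circ> tr b d"
    using assms by (intro tr_cyc_commute) auto
  have "cyc [a,b,d] \<circ> cyc (a # R) = tr a b \<circ> (tr b d \<circ> cyc (a # R))"
    by (simp add: o_assoc)
  also have "\<dots> = tr a b \<circ> (cyc (a # R) \<circ> tr b d)" using cm by simp
  also have "\<dots> = cyc (a # R @ [b,d])" using e1 by simp
  finally show ?thesis .
qed

lemma cyc_rot: assumes "distinct L" "b \<in> set L"
  shows "\<exists>R. cyc L = cyc (b # R) \<and> distinct (b # R) \<and> set (b # R) = set L \<and> length (b # R) = length L"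
proof -
  obtain X Y where L: "L = X @ b # Y" using split_list[OF assms(2)] by blast
  have "rotate (length X) (X @ (b # Y)) = (b # Y) @ X" by (rule rotate_append)
  hence "cyc L = cyc (b # Y @ X)" using cycle_of_list_rotate_independent[OF assms(1), of "length X"] L by simp
  moreover have "distinct (b # Y @ X)" "set (b # Y @ X) = set L" "length (b # Y @ X) = length L"
    using assms(1) L by auto
  ultimately show ?thesis by blast
qed

lemma c3_vals: assumes "distinct [a,b,d]"
  shows "cyc [a,b,d] a = b" "cyc [a,b,d] b = d" "cyc [a,b,d] d = a"
    "x \<notin> {a,b,d} \<Longrightarrow> cyc [a,b,d] x = x"
  using assms by (auto simp: transpose_def)

definition s0 :: "nat \<Rightarrow> nat \<Rightarrow> nat" where "s0 k = cyc [1..<Suc k]"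

lemma s0_props: assumes "2 \<le> k"
  shows "distinct [1..<Suc k]" "set [1..<Suc k] = {1..k}" "length [1..<Suc k] = k"
    "{x. s0 k x \<noteq> x} = {1..k}" "s0 k permutes {1..k}"
proof -
  show a: "distinct [1..<Suc k]" by simp
  show b: "set [1..<Suc k] = {1..k}" by auto
  show c: "length [1..<Suc k] = k" by simp
  show "{x. s0 k x \<noteq> x} = {1..k}" unfolding s0_def using supp_cyc[OF a] c b assms by simp
  show "s0 k permutes {1..k}" unfolding s0_def using cycle_permutes[of "[1..<Suc k]"] b by simp
qed


lemma s0_fix: "2 \<le> k \<Longrightarrow> x \<notin> {1..k} \<Longrightarrow> s0 k x = x" using s0_props(4)[of k] by blast
lemma s0_move: "2 \<le> k \<Longrightarrow> x \<in> {1..k} \<Longrightarrow> s0 k x \<noteq> x" using s0_props(4)[of k] by blast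
lemma s0_in: "2 \<le> k \<Longrightarrow> x \<in> {1..k} \<Longrightarrow> s0 k x \<in> {1..k}"
  using permutes_in_image[OF s0_props(5)] by simp

lemma Z0: assumes "2 \<le> k" "distinct [a,b,d]" "a \<notin> {1..k}" "b \<notin> {1..k}" "d \<notin> {1..k}"
  shows "\<not> is_k_cycle k (cyc [a,b,d] \<circ> s0 k)"
proof
  assume K: "is_k_cycle k (cyc [a,b,d] \<circ> s0 k)"
  have one: "(1::nat) \<in> {1..k}" using assms(1) by simp
  have "s0 k 1 \<notin> {a,b,d}" using s0_in[OF assms(1) one] assms(3-5) by blast
  hence f1: "(cyc [a,b,d] \<circ> s0 k) 1 \<noteq> 1"
    using c3_vals(4)[OF assms(2)] s0_move[OF assms(1) one] by simp
  have fa: "(cyc [a,b,d] \<circ> s0 k) a \<noteq> a" using s0_fix[OF assms(1,3)] c3_vals(1)[OF assms(2)] assms(2) by simp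
  have inv: "(cyc [a,b,d] \<circ> s0 k) ` {a,b,d} \<subseteq> {a,b,d}"
    using s0_fix[OF assms(1,3)] s0_fix[OF assms(1,4)] s0_fix[OF assms(1,5)] c3_vals(1-3)[OF assms(2)] by simp
  have "1 \<notin> {a,b,d}" using one assms(3-5) by blast
  then show False using kcyc_notinv[OF K assms(1) inv _ _ fa f1] by blast
qed

lemma Z1: assumes "2 \<le> k" "distinct [a,b,d]" "a \<in> {1..k}" "b \<notin> {1..k}" "d \<notin> {1..k}"
  shows "\<not> is_k_cycle k (cyc [a,b,d] \<circ> s0 k)"
proof
  assume K: "is_k_cycle k (cyc [a,b,d] \<circ> s0 k)"
  note sp = s0_props[OF assms(1)]
  have "a \<in> set [1..<Suc k]" using assms(3) by (simp del: upt_Suc)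
  from cyc_rot[OF sp(1) this] obtain R where R0: "cyc [1..<Suc k] = cyc (a # R)" "distinct (a # R)"
     "set (a # R) = set [1..<Suc k]" "length (a # R) = length [1..<Suc k]" by blast
  have R: "s0 k = cyc (a # R)" "distinct (a # R)" "set (a # R) = {1..k}" "length (a # R) = k"
    using R0 sp(2,3) unfolding s0_def by simp_all
  have bd: "b \<notin> set (a # R)" "d \<notin> set (a # R)" using R(3) assms(4,5) by simp_all
  have "cyc [a,b,d] \<circ> s0 k = cyc (a # R @ [b,d])"
    using N1_eq[OF R(2) bd] R(1) assms(2) by simp
  moreover have "distinct (a # R @ [b,d])" using R(2) bd assms(2) by auto
  moreover have "length (a # R @ [b,d]) = k + 2" using R(4) by simp
  ultimately have "is_k_cycle (k+2) (cyc [a,b,d] \<circ> s0 k)" unfolding is_k_cycle_def by blast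
  from kcyc_unique[OF K assms(1) this] show False by simp
qed


lemma cyc_hd2: "b \<notin> set (x # L) \<Longrightarrow> cyc (b # x # L) b = x"
  by (simp add: id_outside_supp)

lemma s0_rot: assumes "2 \<le> k" "a \<in> {1..k}"
  obtains R where "s0 k = cyc (a # R)" "distinct (a # R)" "set (a # R) = {1..k}" "length (a # R) = k"
proof -
  note sp = s0_props[OF assms(1)]
  have "a \<in> set [1..<Suc k]" using assms(2) by (simp del: upt_Suc)
  from cyc_rot[OF sp(1) this] obtain R where R0: "cyc [1..<Suc k] = cyc (a # R)" "distinct (a # R)"
     "set (a # R) = set [1..<Suc k]" "length (a # R) = length [1..<Suc k]" by blast
  have "s0 k = cyc (a # R)" "distinct (a # R)" "set (a # R) = {1..k}" "length (a # R) = k"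
    using R0 sp(2,3) unfolding s0_def by simp_all
  then show ?thesis using that by blast
qed

lemma Z2: assumes "2 \<le> k" "distinct [a,b,d]" "a \<in> {1..k}" "b \<in> {1..k}" "d \<notin> {1..k}"
  shows "is_k_cycle k (cyc [a,b,d] \<circ> s0 k) \<longleftrightarrow> s0 k b = a"
proof -
  obtain R where R: "s0 k = cyc (b # R)" "distinct (b # R)" "set (b # R) = {1..k}" "length (b # R) = k"
    using s0_rot[OF assms(1,4)] by blast
  have "a \<in> set (b # R)" using R(3) assms(3) by simp
  moreover have "a \<noteq> b" using assms(2) by simp
  ultimately have "a \<in> set R" by simp
  from split_list[OF this] obtain X Y where XY: "R = X @ a # Y" by blast
  have dist: "distinct (b # X @ a # Y)" using R(2) XY by simp
  have dn: "d \<notin> set (b # X @ a # Y)" using R(3) XY assms(5) by simp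
  have eq: "cyc [a,b,d] \<circ> s0 k = cyc (b # X) \<circ> cyc (a # Y @ [d])"
    using N2_eq[OF dist dn] R(1) XY by simp
  show ?thesis
  proof (cases X)
    case Nil
    have "s0 k b = a" using R(1) XY Nil cyc_hd2[of b a Y] dist by simp
    moreover have "cyc [a,b,d] \<circ> s0 k = cyc (a # Y @ [d])" using eq Nil by simp
    moreover have "distinct (a # Y @ [d])" using dist dn by auto
    moreover have "length (a # Y @ [d]) = k" using R(4) XY Nil by simp
    ultimately show ?thesis unfolding is_k_cycle_def by blast
  next
    case (Cons x X')
    have "s0 k b = x" using R(1) XY Cons cyc_hd2[of b x "X' @ a # Y"] dist by simp
    moreover have "x \<noteq> a" using dist Cons by auto
    moreover have "\<not> is_k_cycle k (cyc [a,b,d] \<circ> s0 k)"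
    proof
      assume K: "is_k_cycle k (cyc [a,b,d] \<circ> s0 k)"
      let ?f = "cyc (b # X) \<circ> cyc (a # Y @ [d])"
      have K': "is_k_cycle k ?f" using K eq by simp
      have d1: "distinct (b # X)" "distinct (a # Y @ [d])" using dist dn by auto
      have disj: "set (b # X) \<inter> set (a # Y @ [d]) = {}" using dist dn by auto
      have s1: "{x. cyc (b # X) x \<noteq> x} = set (b # X)" using supp_cyc[OF d1(1)] Cons by simp
      have s2: "{x. cyc (a # Y @ [d]) x \<noteq> x} = set (a # Y @ [d])" using supp_cyc[OF d1(2)] by simp
      have fb: "?f b \<noteq> b"
      proof -
        have "cyc (a # Y @ [d]) b = b" using disj by (intro id_outside_supp) auto
        moreover have "cyc (b # X) b \<noteq> b" using s1 by auto
        ultimately show ?thesis by simp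
      qed
      have fd: "?f d \<noteq> d"
      proof -
        have z: "cyc (a # Y @ [d]) d \<in> set (a # Y @ [d])"
          using permutes_in_image[OF cycle_permutes[of "a # Y @ [d]"], of d] by simp
        have "cyc (a # Y @ [d]) d \<noteq> d" using s2 by auto
        moreover have "cyc (b # X) (cyc (a # Y @ [d]) d) = cyc (a # Y @ [d]) d"
          using z disj by (intro id_outside_supp) blast
        ultimately show ?thesis by simp
      qed
      have inv: "?f ` set (b # X) \<subseteq> set (b # X)"
      proof
        fix y assume "y \<in> ?f ` set (b # X)"
        then obtain w where w: "w \<in> set (b # X)" "y = ?f w" by blast
        have "cyc (a # Y @ [d]) w = w" using w(1) disj by (intro id_outside_supp) blast
        moreover have "cyc (b # X) w \<in> set (b # X)"
          by (rule iffD2[OF permutes_in_image[OF cycle_permutes[of "b # X"]] w(1)])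
        ultimately show "y \<in> set (b # X)" using w(2) by simp
      qed
      have "d \<notin> set (b # X)" using dn by simp
      then show False using kcyc_notinv[OF K' assms(1) inv _ _ fb fd] by simp
    qed
    ultimately show ?thesis by simp
  qed
qed



lemma upt_split: "i \<le> j \<Longrightarrow> j \<le> m \<Longrightarrow> [i..<m] = [i..<j] @ [j..<m]"
  using upt_add_eq_append[of i j "m - j"] by simp

lemma dist3_perm: "distinct (p # A @ q # B @ r # C) \<Longrightarrow> distinct (p # A @ r # C @ q # B)"
  by auto

lemma dist3_parts: assumes "distinct (p # A @ q # B @ r # C)" "w \<in> set (p # A)"
  shows "w \<notin> set (q # B)" "w \<notin> set (r # C)" "q \<notin> set (p # A)"
  using assms by auto

lemma s0_three: assumes "1 \<le> p" "p < q" "q < r" "r \<le> k"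
  defines "L \<equiv> p # [Suc p..<q] @ q # [Suc q..<r] @ r # ([Suc r..<Suc k] @ [1..<p])"
  shows "s0 k = cyc L" "distinct L" "set L = {1..k}"
proof -
  have e1: "[1..<Suc k] = [1..<p] @ [p..<Suc k]" using assms by (intro upt_split) auto
  have e2: "[p..<Suc k] = p # [Suc p..<q] @ q # [Suc q..<r] @ r # [Suc r..<Suc k]"
  proof -
    have "[p..<Suc k] = p # [Suc p..<Suc k]" using assms by (intro upt_conv_Cons) auto
    also have "[Suc p..<Suc k] = [Suc p..<q] @ [q..<Suc k]" using assms by (intro upt_split) auto
    also have "[q..<Suc k] = q # [Suc q..<Suc k]" using assms by (intro upt_conv_Cons) auto
    also have "[Suc q..<Suc k] = [Suc q..<r] @ [r..<Suc k]" using assms by (intro upt_split) auto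
    also have "[r..<Suc k] = r # [Suc r..<Suc k]" using assms by (intro upt_conv_Cons) auto
    finally show ?thesis by simp
  qed
  have rot: "rotate (length [1..<p]) ([1..<p] @ [p..<Suc k]) = [p..<Suc k] @ [1..<p]"
    by (rule rotate_append)
  have LL: "L = rotate (length [1..<p]) [1..<Suc k]" using rot e1 e2 unfolding L_def by simp
  have d: "distinct [1..<Suc k]" by simp
  show "s0 k = cyc L" unfolding s0_def LL using cycle_of_list_rotate_independent[OF d] by simp
  show "distinct L" unfolding LL by simp
  show "set L = {1..k}" unfolding LL by auto
qed

lemma Z3pos: assumes "1 \<le> p" "p < q" "q < r" "r \<le> k"
  shows "is_k_cycle k (cyc [p,q,r] \<circ> s0 k)"
proof -
  let ?A = "[Suc p..<q]" and ?B = "[Suc q..<r]" and ?C = "[Suc r..<Suc k] @ [1..<p]"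
  note L = s0_three[OF assms]
  have "cyc [p,q,r] \<circ> s0 k = cyc (p # ?A @ r # ?C @ q # ?B)"
    using P3_eq[OF L(2)] L(1) by simp
  moreover have "distinct (p # ?A @ r # ?C @ q # ?B)" using dist3_perm[OF L(2)] .
  moreover have "length (p # ?A @ r # ?C @ q # ?B) = k"
  proof -
    have "length (p # ?A @ r # ?C @ q # ?B) = length (p # ?A @ q # ?B @ r # ?C)" by simp
    also have "\<dots> = card {1..k}" using distinct_card[OF L(2)] L(3) by simp
    finally show ?thesis by simp
  qed
  ultimately show ?thesis unfolding is_k_cycle_def by blast
qed

lemma Z3neg: assumes "1 \<le> p" "p < q" "q < r" "r \<le> k"
  shows "\<not> is_k_cycle k (cyc [p,r,q] \<circ> s0 k)"
proof
  assume K: "is_k_cycle k (cyc [p,r,q] \<circ> s0 k)"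
  have k2: "2 \<le> k" using assms by simp
  let ?A = "[Suc p..<q]" and ?B = "[Suc q..<r]" and ?C = "[Suc r..<Suc k] @ [1..<p]"
  let ?f = "cyc [p,r,q] \<circ> s0 k"
  note L = s0_three[OF assms]
  have eq: "?f = cyc (p # ?A) \<circ> cyc (q # ?B) \<circ> cyc (r # ?C)"
    using N3_eq[OF L(2)] L(1) by simp
  have sub: "{x. ?f x \<noteq> x} \<subseteq> {1..k}"
  proof
    fix x assume x: "x \<in> {x. ?f x \<noteq> x}"
    show "x \<in> {1..k}"
    proof (rule ccontr)
      assume nx: "x \<notin> {1..k}"
      have "s0 k x = x" using s0_fix[OF k2 nx] .
      moreover have "x \<notin> set [p,r,q]" using nx assms by auto
      ultimately have "?f x = x" by (simp add: id_outside_supp)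
      then show False using x by simp
    qed
  qed
  have c: "finite {x. ?f x \<noteq> x}" "card {x. ?f x \<noteq> x} = k" using kcyc_card[OF K k2] by auto
  have all: "{x. ?f x \<noteq> x} = {1..k}"
    using card_subset_eq[OF _ sub] c by simp
  have "p \<in> {x. ?f x \<noteq> x}" unfolding all using assms by simp
  hence fp: "?f p \<noteq> p" by simp
  have "q \<in> {x. ?f x \<noteq> x}" unfolding all using assms by simp
  hence fq: "?f q \<noteq> q" by simp
  have d: "distinct (p # ?A @ q # ?B @ r # ?C)" using L(2) .
  have inv: "?f ` set (p # ?A) \<subseteq> set (p # ?A)"
  proof
    fix y assume "y \<in> ?f ` set (p # ?A)"
    then obtain w where w: "w \<in> set (p # ?A)" "y = ?f w" by blast
    have "w \<notin> set (r # ?C)" "w \<notin> set (q # ?B)" using dist3_parts[OF d w(1)] by simp_all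
    then have "cyc (r # ?C) w = w" "cyc (q # ?B) w = w" by (simp_all add: id_outside_supp)
    moreover have "cyc (p # ?A) w \<in> set (p # ?A)"
      by (rule iffD2[OF permutes_in_image[OF cycle_permutes[of "p # ?A"]] w(1)])
    moreover have "y = cyc (p # ?A) (cyc (q # ?B) (cyc (r # ?C) w))"
      using w(2) fun_cong[OF eq, of w] by (simp only: comp_apply)
    ultimately show "y \<in> set (p # ?A)" by (simp only:)
  qed
  have "q \<notin> set (p # ?A)" using dist3_parts[OF d, of p] by simp
  then show False using kcyc_notinv[OF K k2 inv _ _ fp fq] by simp
qed



lemma c3_rot: "distinct [a,b,d] \<Longrightarrow> cyc [a,b,d] = cyc [b,d,a]"
  by (auto simp: fun_eq_iff transpose_def)

lemma cyc3_repr: assumes "c permutes S" "is_k_cycle 3 c"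
  obtains a b d where "distinct [a,b,d]" "a \<in> S" "b \<in> S" "d \<in> S" "c = cyc [a,b,d]"
proof -
  obtain cs where cs: "distinct cs" "length cs = 3" "c = cyc cs" using assms(2) unfolding is_k_cycle_def by blast
  then obtain a b d where abd: "cs = [a,b,d]" by (auto simp: length_Suc_conv numeral_3_eq_3)
  have "{x. c x \<noteq> x} = {a,b,d}" using supp_cyc[of cs] cs abd by simp
  moreover have "{x. c x \<noteq> x} \<subseteq> S" using permutes_not_in[OF assms(1)] by blast
  ultimately have "a \<in> S" "b \<in> S" "d \<in> S" by blast+
  then show ?thesis using that cs abd by blast
qed

definition T3 :: "nat \<Rightarrow> (nat \<times> nat \<times> nat) set" where
  "T3 k = {(p,q,r). 1 \<le> p \<and> p < q \<and> q < r \<and> r \<le> k}"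

definition G1 :: "nat \<Rightarrow> (nat \<Rightarrow> nat) set" where
  "G1 k = (\<lambda>(p,q,r). cyc [p,q,r]) ` T3 k"

definition G2 :: "nat \<Rightarrow> nat \<Rightarrow> (nat \<Rightarrow> nat) set" where
  "G2 n k = (\<lambda>(b,d). cyc [s0 k b, b, d]) ` ({1..k} \<times> {Suc k..n})"

definition good :: "nat \<Rightarrow> nat \<Rightarrow> (nat \<Rightarrow> nat) set" where
  "good n k = {c. c permutes {1..n} \<and> is_k_cycle 3 c \<and> is_k_cycle k (c \<circ> s0 k)}"

lemma good_sub: assumes "2 \<le> k" "k \<le> n" "distinct [a,b,d]" "a \<in> {1..n}" "b \<in> {1..n}" "d \<in> {1..n}"
  "is_k_cycle k (cyc [a,b,d] \<circ> s0 k)"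
  shows "cyc [a,b,d] \<in> G1 k \<union> G2 n k"
proof -
  have r1: "cyc [a,b,d] = cyc [b,d,a]" using c3_rot[OF assms(3)] .
  have r2: "cyc [a,b,d] = cyc [d,a,b]" using c3_rot[of b d a] r1 assms(3) by simp
  have d1: "distinct [b,d,a]" "distinct [d,a,b]" using assms(3) by auto
  have K1: "is_k_cycle k (cyc [b,d,a] \<circ> s0 k)" using assms(7) r1 by simp
  have K2: "is_k_cycle k (cyc [d,a,b] \<circ> s0 k)" using assms(7) r2 by simp
  have g2: "cyc [x,y,z] \<in> G2 n k" if "s0 k y = x" "y \<in> {1..k}" "z \<in> {1..n}" "z \<notin> {1..k}" for x y z
  proof -
    have "z \<in> {Suc k..n}" using that(3,4) by auto
    then have "(y,z) \<in> {1..k} \<times> {Suc k..n}" using that(2) by simp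
    then show ?thesis unfolding G2_def using that(1) by force
  qed
  have g1: "cyc [x,y,z] \<in> G1 k" if "1 \<le> x" "x < y" "y < z" "z \<le> k" for x y z
    unfolding G1_def T3_def using that by force
  consider (n0) "a \<notin> {1..k}" "b \<notin> {1..k}" "d \<notin> {1..k}"
    | (na) "a \<in> {1..k}" "b \<notin> {1..k}" "d \<notin> {1..k}"
    | (nb) "a \<notin> {1..k}" "b \<in> {1..k}" "d \<notin> {1..k}"
    | (nd) "a \<notin> {1..k}" "b \<notin> {1..k}" "d \<in> {1..k}"
    | (ab) "a \<in> {1..k}" "b \<in> {1..k}" "d \<notin> {1..k}"
    | (bd) "a \<notin> {1..k}" "b \<in> {1..k}" "d \<in> {1..k}"
    | (ad) "a \<in> {1..k}" "b \<notin> {1..k}" "d \<in> {1..k}"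
    | (all) "a \<in> {1..k}" "b \<in> {1..k}" "d \<in> {1..k}"
    by blast
  then show ?thesis
  proof cases
    case n0 then show ?thesis using Z0[OF assms(1,3)] assms(7) by blast
  next
    case na then show ?thesis using Z1[OF assms(1,3)] assms(7) by blast
  next
    case nb then show ?thesis using Z1[OF assms(1) d1(1)] K1 by blast
  next
    case nd then show ?thesis using Z1[OF assms(1) d1(2)] K2 by blast
  next
    case ab
    then have "s0 k b = a" using Z2[OF assms(1,3)] assms(7) by blast
    then show ?thesis using g2 ab assms(6) by blast
  next
    case bd
    then have "s0 k d = b" using Z2[OF assms(1) d1(1)] K1 by blast
    then show ?thesis using g2[of d b a] bd assms(4) r1 by simp
  next
    case ad
    then have "s0 k a = d" using Z2[OF assms(1) d1(2)] K2 by blast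
    then show ?thesis using g2[of a d b] ad assms(5) r2 by simp
  next
    case all
    have ne: "a \<noteq> b" "b \<noteq> d" "a \<noteq> d" using assms(3) by auto
    have lo: "1 \<le> a" "1 \<le> b" "1 \<le> d" "a \<le> k" "b \<le> k" "d \<le> k" using all by auto
    consider "a < b" "b < d" | "a < d" "d < b" | "b < a" "a < d" | "b < d" "d < a" | "d < a" "a < b" | "d < b" "b < a"
      using ne by linarith
    then show ?thesis
    proof cases
      case 1 then show ?thesis using g1[of a b d] lo by simp
    next
      case 2 then show ?thesis using Z3neg[of a d b k] lo assms(7) by simp
    next
      case 3 then show ?thesis using Z3neg[of b a d k] lo K1 by simp
    next
      case 4 then show ?thesis using g1[of b d a] lo r1 by simp
    next
      case 5 then show ?thesis using g1[of d a b] lo r2 by simp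
    next
      case 6 then show ?thesis using Z3neg[of d b a k] lo K2 by simp
    qed
  qed
qed



lemma cyc3_perm: "a \<in> S \<Longrightarrow> b \<in> S \<Longrightarrow> d \<in> S \<Longrightarrow> cyc [a,b,d] permutes S"
  using permutes_subset[OF cycle_permutes[of "[a,b,d]"]] by simp

lemma cyc3_is: "distinct [a,b,d] \<Longrightarrow> is_k_cycle 3 (cyc [a,b,d])"
  unfolding is_k_cycle_def by (intro exI[of _ "[a,b,d]"]) simp

lemma G1_sub: assumes "2 \<le> k" "k \<le> n" shows "G1 k \<subseteq> good n k"
proof
  fix c assume "c \<in> G1 k"
  then obtain p q r where pqr: "1 \<le> p" "p < q" "q < r" "r \<le> k" "c = cyc [p,q,r]"
    unfolding G1_def T3_def by auto
  have "c permutes {1..n}" using cyc3_perm[of p "{1..n}" q r] pqr assms by simp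
  moreover have "is_k_cycle 3 c" using cyc3_is[of p q r] pqr by simp
  moreover have "is_k_cycle k (c \<circ> s0 k)" using Z3pos[OF pqr(1-4)] pqr(5) by simp
  ultimately show "c \<in> good n k" unfolding good_def by blast
qed

lemma G2_sub: assumes "2 \<le> k" "k \<le> n" shows "G2 n k \<subseteq> good n k"
proof
  fix c assume "c \<in> G2 n k"
  then obtain b d where bd: "b \<in> {1..k}" "d \<in> {Suc k..n}" "c = cyc [s0 k b, b, d]"
    unfolding G2_def by auto
  have a: "s0 k b \<in> {1..k}" "s0 k b \<noteq> b" using s0_in[OF assms(1) bd(1)] s0_move[OF assms(1) bd(1)] by auto
  have dn: "d \<notin> {1..k}" using bd(2) by simp
  have dist: "distinct [s0 k b, b, d]" using a bd(1) dn by auto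
  have "c permutes {1..n}" using cyc3_perm[of "s0 k b" "{1..n}" b d] a bd assms by simp
  moreover have "is_k_cycle 3 c" using cyc3_is[OF dist] bd(3) by simp
  moreover have "is_k_cycle k (c \<circ> s0 k)" using Z2[OF assms(1) dist a(1) bd(1) dn] bd(3) by simp
  ultimately show "c \<in> good n k" unfolding good_def by blast
qed

lemma good_eq: assumes "2 \<le> k" "k \<le> n" shows "good n k = G1 k \<union> G2 n k"
proof
  show "G1 k \<union> G2 n k \<subseteq> good n k" using G1_sub[OF assms] G2_sub[OF assms] by blast
next
  show "good n k \<subseteq> G1 k \<union> G2 n k"
  proof
    fix c assume "c \<in> good n k"
    then have c: "c permutes {1..n}" "is_k_cycle 3 c" "is_k_cycle k (c \<circ> s0 k)" unfolding good_def by auto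
    obtain a b d where abd: "distinct [a,b,d]" "a \<in> {1..n}" "b \<in> {1..n}" "d \<in> {1..n}" "c = cyc [a,b,d]"
      using cyc3_repr[OF c(1,2)] by blast
    show "c \<in> G1 k \<union> G2 n k" using good_sub[OF assms abd(1-4)] c(3) abd(5) by simp
  qed
qed

lemma G12_disj: assumes "2 \<le> k" shows "G1 k \<inter> G2 n k = {}"
proof -
  { fix c assume c1: "c \<in> G1 k" and c2: "c \<in> G2 n k"
    obtain p q r where pqr: "1 \<le> p" "p < q" "q < r" "r \<le> k" "c = cyc [p,q,r]"
      using c1 unfolding G1_def T3_def by auto
    obtain b d where bd: "b \<in> {1..k}" "d \<in> {Suc k..n}" "c = cyc [s0 k b, b, d]"
      using c2 unfolding G2_def by auto
    have "d \<notin> {p,q,r}" using pqr bd(2) by auto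
    then have "c d = d" using pqr by (simp add: transpose_def)
    moreover have "c d \<noteq> d"
    proof -
      have a: "s0 k b \<in> {1..k}" "s0 k b \<noteq> b" using s0_in[OF assms bd(1)] s0_move[OF assms bd(1)] by auto
      have "distinct [s0 k b, b, d]" using a bd(1,2) by auto
      from c3_vals(3)[OF this] show ?thesis using bd(2,3) a(1) by auto
    qed
    ultimately have False by simp }
  then show ?thesis by blast
qed

lemma T3_fin: "finite (T3 k)"
proof -
  have "T3 k \<subseteq> {1..k} \<times> {1..k} \<times> {1..k}" unfolding T3_def by auto
  then show ?thesis by (rule finite_subset) simp
qed

lemma G1_card: "card (G1 k) = card (T3 k)"
  unfolding G1_def
proof (rule card_image, rule inj_onI)
  fix x y assume x: "x \<in> T3 k" and y: "y \<in> T3 k"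
    and eq: "(\<lambda>(p,q,r). cyc [p,q,r]) x = (\<lambda>(p,q,r). cyc [p,q,r]) y"
  obtain p q r where xp: "x = (p,q,r)" "1 \<le> p" "p < q" "q < r" "r \<le> k" using x unfolding T3_def by auto
  obtain p' q' r' where yp: "y = (p',q',r')" "1 \<le> p'" "p' < q'" "q' < r'" "r' \<le> k" using y unfolding T3_def by auto
  have e: "cyc [p,q,r] = cyc [p',q',r']" using eq xp yp by simp
  have d1: "distinct [p,q,r]" "distinct [p',q',r']" using xp yp by auto
  have "cyc [p',q',r'] p = q" using c3_vals(1)[OF d1(1)] unfolding e .
  then have "cyc [p',q',r'] p \<noteq> p" using d1(1) by auto
  then have "p \<in> {p',q',r'}" using c3_vals(4)[OF d1(2)] by blast
  moreover have "cyc [p,q,r] p' = q'" using c3_vals(1)[OF d1(2)] unfolding e .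
  then have "cyc [p,q,r] p' \<noteq> p'" using d1(2) by auto
  then have "p' \<in> {p,q,r}" using c3_vals(4)[OF d1(1)] by blast
  ultimately have pp: "p = p'" using xp yp by auto
  have qq: "q = q'" using c3_vals(1)[OF d1(1)] c3_vals(1)[OF d1(2)] e pp by metis
  have rr: "r = r'" using c3_vals(2)[OF d1(1)] c3_vals(2)[OF d1(2)] e qq by metis
  show "x = y" using xp yp pp qq rr by simp
qed

lemma G2_card: assumes "2 \<le> k" shows "card (G2 n k) = k * (n - k)"
proof -
  have "inj_on (\<lambda>(b,d). cyc [s0 k b, b, d]) ({1..k} \<times> {Suc k..n})"
  proof (rule inj_onI)
    fix x y assume x: "x \<in> {1..k} \<times> {Suc k..n}" and y: "y \<in> {1..k} \<times> {Suc k..n}"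
      and eq: "(\<lambda>(b,d). cyc [s0 k b, b, d]) x = (\<lambda>(b,d). cyc [s0 k b, b, d]) y"
    obtain b d where xb: "x = (b,d)" "b \<in> {1..k}" "d \<in> {Suc k..n}" using x by auto
    obtain b' d' where yb: "y = (b',d')" "b' \<in> {1..k}" "d' \<in> {Suc k..n}" using y by auto
    have e: "cyc [s0 k b, b, d] = cyc [s0 k b', b', d']" using eq xb yb by simp
    have a: "s0 k b \<in> {1..k}" "s0 k b \<noteq> b" using s0_in[OF assms xb(2)] s0_move[OF assms xb(2)] by auto
    have a': "s0 k b' \<in> {1..k}" "s0 k b' \<noteq> b'" using s0_in[OF assms yb(2)] s0_move[OF assms yb(2)] by auto
    have d1: "distinct [s0 k b, b, d]" using a xb by auto
    have d2: "distinct [s0 k b', b', d']" using a' yb by auto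
    have "cyc [s0 k b, b, d] d' = s0 k b'" using c3_vals(3)[OF d2] unfolding e .
    then have "cyc [s0 k b, b, d] d' \<noteq> d'" using d2 by auto
    then have "d' \<in> {s0 k b, b, d}" using c3_vals(4)[OF d1] by blast
    then have dd: "d = d'" using a xb yb by auto
    have aa: "s0 k b = s0 k b'" using c3_vals(3)[OF d1] c3_vals(3)[OF d2] e dd by metis
    have bb: "b = b'" using c3_vals(1)[OF d1] c3_vals(1)[OF d2] e aa by metis
    show "x = y" using xb yb dd bb by simp
  qed
  then have "card (G2 n k) = card ({1..k} \<times> {Suc k..n})" unfolding G2_def by (rule card_image)
  also have "\<dots> = k * (n - k)" by (simp add: card_cartesian_product)
  finally show ?thesis .
qed

lemma good_card: assumes "2 \<le> k" "k \<le> n" shows "card (good n k) = card (T3 k) + k * (n - k)"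
proof -
  have f1: "finite (G1 k)" unfolding G1_def using T3_fin by simp
  have f2: "finite (G2 n k)" unfolding G2_def by simp
  have "card (good n k) = card (G1 k) + card (G2 n k)"
    using good_eq[OF assms] card_Un_disjoint[OF f1 f2 G12_disj[OF assms(1)]] by simp
  then show ?thesis using G1_card G2_card[OF assms(1)] by simp
qed



lemma inv_conj: assumes "g permutes S" "s permutes S"
  shows "inv (g \<circ> s \<circ> inv g) = g \<circ> inv s \<circ> inv g"
  by (rule inv_unique_comp) (auto simp: fun_eq_iff permutes_inverses[OF assms(1)] permutes_inverses[OF assms(2)])

lemma inv_comp_perm: assumes "g permutes S" "s permutes S"
  shows "inv (g \<circ> s) = inv s \<circ> inv g"
  by (rule inv_unique_comp) (auto simp: fun_eq_iff permutes_inverses[OF assms(1)] permutes_inverses[OF assms(2)])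

lemma kcyc_conj: assumes "bij g" "is_k_cycle k c" shows "is_k_cycle k (g \<circ> c \<circ> inv g)"
proof -
  obtain cs where cs: "distinct cs" "length cs = k" "c = cyc cs" using assms(2) unfolding is_k_cycle_def by blast
  have "g \<circ> c \<circ> inv g = cyc (map g cs)" using conjugation_of_cycle[OF cs(1) assms(1)] cs(3) by simp
  moreover have "distinct (map g cs)" using cs(1) bij_is_inj[OF assms(1)] by (auto simp: distinct_map inj_def inj_on_def)
  moreover have "length (map g cs) = k" using cs(2) by simp
  ultimately show ?thesis unfolding is_k_cycle_def by blast
qed

lemma transport: assumes "distinct xs" "distinct ys" "length xs = length ys" "set xs \<subseteq> S" "set ys \<subseteq> S"
  shows "\<exists>g. g permutes S \<and> map g xs = ys"
  using assms
proof (induction xs arbitrary: ys)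
  case Nil then show ?case using permutes_id by fastforce
next
  case (Cons x xs)
  then obtain y ys' where ys: "ys = y # ys'" by (cases ys) auto
  have "\<exists>g. g permutes S \<and> map g xs = ys'" using Cons.IH[of ys'] Cons.prems ys by auto
  then obtain g where g: "g permutes S" "map g xs = ys'" by blast
  define h where "h = tr y (g x) \<circ> g"
  have xS: "x \<in> S" "y \<in> S" using Cons.prems ys by auto
  have gx: "g x \<in> S" using permutes_in_image[OF g(1)] xS by simp
  have hp: "h permutes S" unfolding h_def by (rule permutes_compose[OF g(1) permutes_swap_id[OF xS(2) gx]])
  have "map h xs = ys'"
  proof -
    have "h z = g z" if "z \<in> set xs" for z
    proof -
      have "g z \<in> set ys'" using g(2) that by auto
      hence "g z \<noteq> y" using Cons.prems(2) ys by auto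
      moreover have "g z \<noteq> g x" using permutes_inj[OF g(1)] that Cons.prems(1) by (metis distinct.simps(2) injD)
      ultimately show ?thesis unfolding h_def by (simp add: transpose_def)
    qed
    then have "map h xs = map g xs" by simp
    then show ?thesis using g(2) by simp
  qed
  moreover have "h x = y" unfolding h_def by simp
  ultimately show ?case using hp ys by auto
qed

definition Kc :: "nat \<Rightarrow> nat \<Rightarrow> (nat \<Rightarrow> nat) set" where
  "Kc n k = {s. s permutes {1..n} \<and> is_k_cycle k s}"

lemma K_eq: assumes "2 \<le> k" "k \<le> n"
  shows "Kc n k = (\<lambda>g. g \<circ> s0 k \<circ> inv g) ` {g. g permutes {1..n}}"
proof
  have s0p: "s0 k permutes {1..n}" using permutes_subset[OF s0_props(5)[OF assms(1)]] assms by auto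
  have s0k: "is_k_cycle k (s0 k)" unfolding is_k_cycle_def s0_def
    using s0_props(1,3)[OF assms(1)] by blast
  show "(\<lambda>g. g \<circ> s0 k \<circ> inv g) ` {g. g permutes {1..n}} \<subseteq> Kc n k"
  proof
    fix u assume "u \<in> (\<lambda>g. g \<circ> s0 k \<circ> inv g) ` {g. g permutes {1..n}}"
    then obtain g where g: "g permutes {1..n}" "u = g \<circ> s0 k \<circ> inv g" by blast
    have "u permutes {1..n}" using g permutes_compose permutes_inv s0p by metis
    moreover have "is_k_cycle k u" using kcyc_conj[OF permutes_bij[OF g(1)] s0k] g(2) by simp
    ultimately show "u \<in> Kc n k" unfolding Kc_def by blast
  qed
  show "Kc n k \<subseteq> (\<lambda>g. g \<circ> s0 k \<circ> inv g) ` {g. g permutes {1..n}}"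
  proof
    fix u assume "u \<in> Kc n k"
    then have u: "u permutes {1..n}" "is_k_cycle k u" unfolding Kc_def by auto
    obtain cs where cs: "distinct cs" "length cs = k" "u = cyc cs" using u(2) unfolding is_k_cycle_def by blast
    have "{x. u x \<noteq> x} = set cs" using supp_cyc[OF cs(1)] cs assms by simp
    moreover have "{x. u x \<noteq> x} \<subseteq> {1..n}" using permutes_not_in[OF u(1)] by blast
    ultimately have csS: "set cs \<subseteq> {1..n}" by simp
    have sub: "set [1..<Suc k] \<subseteq> {1..n}" using assms by (auto simp del: upt_Suc)
    have len: "length [1..<Suc k] = length cs" using cs(2) by (simp del: upt_Suc)
    from transport[OF s0_props(1)[OF assms(1)] cs(1) len sub csS]
    obtain g where g: "g permutes {1..n}" "map g [1..<Suc k] = cs" by blast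
    have "g \<circ> s0 k \<circ> inv g = cyc (map g [1..<Suc k])" unfolding s0_def
      using conjugation_of_cycle[OF s0_props(1)[OF assms(1)] permutes_bij[OF g(1)]] .
    then have "u = g \<circ> s0 k \<circ> inv g" using g(2) cs(3) by simp
    then show "u \<in> (\<lambda>g. g \<circ> s0 k \<circ> inv g) ` {g. g permutes {1..n}}" using g(1) by blast
  qed
qed

definition Cent :: "'a set \<Rightarrow> ('a \<Rightarrow> 'a) \<Rightarrow> ('a \<Rightarrow> 'a) set" where
  "Cent S s = {h. h permutes S \<and> h \<circ> s = s \<circ> h}"

lemma fiber: assumes "s permutes S" "g0 permutes S"
  shows "{g. g permutes S \<and> g \<circ> s \<circ> inv g = g0 \<circ> s \<circ> inv g0} = (\<lambda>h. g0 \<circ> h) ` Cent S s"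
proof
  show "(\<lambda>h. g0 \<circ> h) ` Cent S s \<subseteq> {g. g permutes S \<and> g \<circ> s \<circ> inv g = g0 \<circ> s \<circ> inv g0}"
  proof
    fix g assume "g \<in> (\<lambda>h. g0 \<circ> h) ` Cent S s"
    then obtain h where h: "h permutes S" "h \<circ> s = s \<circ> h" "g = g0 \<circ> h" unfolding Cent_def by blast
    have gp: "g permutes S" using h(1,3) assms(2) permutes_compose by blast
    have "inv g = inv h \<circ> inv g0" using inv_comp_perm[OF assms(2) h(1)] h(3) by simp
    have "g \<circ> s \<circ> inv g = g0 \<circ> (h \<circ> s) \<circ> inv h \<circ> inv g0" using \<open>inv g = _\<close> h(3) by (simp add: o_assoc)
    also have "\<dots> = g0 \<circ> s \<circ> (h \<circ> inv h) \<circ> inv g0" using h(2) by (simp add: o_assoc)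
    also have "\<dots> = g0 \<circ> s \<circ> inv g0" using permutes_inv_o(1)[OF h(1)] by simp
    finally show "g \<in> {g. g permutes S \<and> g \<circ> s \<circ> inv g = g0 \<circ> s \<circ> inv g0}" using gp by blast
  qed
  show "{g. g permutes S \<and> g \<circ> s \<circ> inv g = g0 \<circ> s \<circ> inv g0} \<subseteq> (\<lambda>h. g0 \<circ> h) ` Cent S s"
  proof
    fix g assume "g \<in> {g. g permutes S \<and> g \<circ> s \<circ> inv g = g0 \<circ> s \<circ> inv g0}"
    then have g: "g permutes S" "g \<circ> s \<circ> inv g = g0 \<circ> s \<circ> inv g0" by auto
    define h where "h = inv g0 \<circ> g"
    have hp: "h permutes S" unfolding h_def using permutes_compose[OF g(1) permutes_inv[OF assms(2)]] .
    have "h \<circ> s = s \<circ> h"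
    proof
      fix x
      have "g (s (inv g (g x))) = g0 (s (inv g0 (g x)))" using fun_cong[OF g(2), of "g x"] by simp
      then have "g (s x) = g0 (s (inv g0 (g x)))" by (simp add: permutes_inverses[OF g(1)])
      then have "inv g0 (g (s x)) = s (inv g0 (g x))" by (simp add: permutes_inverses[OF assms(2)])
      then show "(h \<circ> s) x = (s \<circ> h) x" unfolding h_def by simp
    qed
    moreover have "g = g0 \<circ> h" unfolding h_def using permutes_inv_o(1)[OF assms(2)] by (simp add: o_assoc)
    ultimately show "g \<in> (\<lambda>h. g0 \<circ> h) ` Cent S s" using hp unfolding Cent_def by blast
  qed
qed

lemma fiber_card: assumes "s permutes S" "g0 permutes S"
  shows "card {g. g permutes S \<and> g \<circ> s \<circ> inv g = g0 \<circ> s \<circ> inv g0} = card (Cent S s)"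
proof -
  have "inj_on (\<lambda>h. g0 \<circ> h) (Cent S s)"
  proof (rule inj_onI)
    fix h1 h2 assume "g0 \<circ> h1 = g0 \<circ> h2"
    then have "inv g0 \<circ> (g0 \<circ> h1) = inv g0 \<circ> (g0 \<circ> h2)" by simp
    then show "h1 = h2" using permutes_inv_o(2)[OF assms(2)] by (simp add: o_assoc)
  qed
  then show ?thesis using fiber[OF assms] by (simp add: card_image)
qed



definition Tset :: "nat \<Rightarrow> (nat \<Rightarrow> nat) \<Rightarrow> (nat \<Rightarrow> nat) set" where
  "Tset n s = {t. t permutes {1..n} \<and> is_k_cycle 3 (s \<circ> t \<circ> inv s \<circ> inv t)}"

lemma comm_conj: assumes "g permutes S" "s permutes S" "t permutes S"
  shows "(g \<circ> s \<circ> inv g) \<circ> (g \<circ> t \<circ> inv g) \<circ> inv (g \<circ> s \<circ> inv g) \<circ> inv (g \<circ> t \<circ> inv g)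
     = g \<circ> (s \<circ> t \<circ> inv s \<circ> inv t) \<circ> inv g"
  unfolding inv_conj[OF assms(1,2)] inv_conj[OF assms(1,3)]
  by (simp add: fun_eq_iff permutes_inverses[OF assms(1)])

lemma comm_eq: assumes "s permutes S" "t permutes S"
  shows "s \<circ> t \<circ> inv s \<circ> inv t = s \<circ> inv (t \<circ> s \<circ> inv t)"
  unfolding inv_conj[OF assms(2,1)] by (simp add: o_assoc)

lemma inv3: assumes "is_k_cycle 3 c" shows "is_k_cycle 3 (inv c)"
proof -
  obtain cs where cs: "distinct cs" "length cs = 3" "c = cyc cs" using assms unfolding is_k_cycle_def by blast
  then obtain a b d where abd: "cs = [a,b,d]" by (auto simp: length_Suc_conv numeral_3_eq_3)
  have d: "distinct [d,b,a]" using cs abd by auto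
  have "inv (cyc [a,b,d]) = cyc [d,b,a]"
    by (rule inv_unique_comp) (use d in \<open>auto simp: fun_eq_iff transpose_def\<close>)
  then show ?thesis using cyc3_is[OF d] cs abd by simp
qed

lemma Tset_fin: "finite (Tset n s)"
  unfolding Tset_def by (rule finite_subset[OF _ finite_permutations[of "{1..n}"]]) auto

lemma F_le: assumes "g permutes {1..n}" "s permutes {1..n}"
  shows "card (Tset n s) \<le> card (Tset n (g \<circ> s \<circ> inv g))"
proof (rule card_inj_on_le[of "\<lambda>t. g \<circ> t \<circ> inv g"])
  show "inj_on (\<lambda>t. g \<circ> t \<circ> inv g) (Tset n s)"
  proof (rule inj_onI)
    fix t1 t2 assume e: "g \<circ> t1 \<circ> inv g = g \<circ> t2 \<circ> inv g"
    show "t1 = t2"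
    proof
      fix x
      have "g (t1 (inv g (g x))) = g (t2 (inv g (g x)))" using fun_cong[OF e, of "g x"] by simp
      then have "g (t1 x) = g (t2 x)" by (simp add: permutes_inverses[OF assms(1)])
      then show "t1 x = t2 x" using permutes_inj[OF assms(1)] by (simp add: inj_eq)
    qed
  qed
  show "(\<lambda>t. g \<circ> t \<circ> inv g) ` Tset n s \<subseteq> Tset n (g \<circ> s \<circ> inv g)"
  proof
    fix u assume "u \<in> (\<lambda>t. g \<circ> t \<circ> inv g) ` Tset n s"
    then obtain t where t: "t permutes {1..n}" "is_k_cycle 3 (s \<circ> t \<circ> inv s \<circ> inv t)" "u = g \<circ> t \<circ> inv g"
      unfolding Tset_def by blast
    have "u permutes {1..n}" using t(1,3) assms(1) permutes_compose permutes_inv by metis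
    moreover have "is_k_cycle 3 ((g \<circ> s \<circ> inv g) \<circ> u \<circ> inv (g \<circ> s \<circ> inv g) \<circ> inv u)"
      using comm_conj[OF assms t(1)] kcyc_conj[OF permutes_bij[OF assms(1)] t(2)] t(3) by simp
    ultimately show "u \<in> Tset n (g \<circ> s \<circ> inv g)" unfolding Tset_def by blast
  qed
  show "finite (Tset n (g \<circ> s \<circ> inv g))" by (rule Tset_fin)
qed

lemma F_eq: assumes "g permutes {1..n}" "s permutes {1..n}"
  shows "card (Tset n (g \<circ> s \<circ> inv g)) = card (Tset n s)"
proof -
  have gs: "g \<circ> s \<circ> inv g permutes {1..n}" using assms permutes_compose permutes_inv by metis
  have "inv g \<circ> (g \<circ> s \<circ> inv g) \<circ> inv (inv g) = s"
    unfolding permutes_inv_inv[OF assms(1)] by (simp add: fun_eq_iff permutes_inverses[OF assms(1)])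
  then have "card (Tset n (g \<circ> s \<circ> inv g)) \<le> card (Tset n s)"
    using F_le[OF permutes_inv[OF assms(1)] gs] by simp
  then show ?thesis using F_le[OF assms] by simp
qed



lemma card_fibers: assumes "finite A" "\<And>u. u \<in> f ` A \<Longrightarrow> card {x\<in>A. f x = u} = c"
  shows "card A = card (f ` A) * c"
proof -
  have "card A = (\<Sum>x\<in>A. 1::nat)" by simp
  also have "\<dots> = (\<Sum>u\<in>f ` A. \<Sum>x\<in>{x\<in>A. f x = u}. 1)" by (rule sum.image_gen[OF assms(1)])
  also have "\<dots> = (\<Sum>u\<in>f ` A. c)" using assms(2) by (intro sum.cong) auto
  finally show ?thesis by simp
qed

lemma s0_perm: "2 \<le> k \<Longrightarrow> k \<le> n \<Longrightarrow> s0 k permutes {1..n}"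
  using permutes_subset[OF s0_props(5)] by auto

lemma s0_kcyc: "2 \<le> k \<Longrightarrow> is_k_cycle k (s0 k)"
  unfolding is_k_cycle_def s0_def using s0_props(1,3) by blast

lemma Cent_pos: "finite S \<Longrightarrow> 0 < card (Cent S s)"
proof -
  assume f: "finite S"
  have "id \<in> Cent S s" unfolding Cent_def by (simp add: permutes_id)
  moreover have "finite (Cent S s)" unfolding Cent_def
    by (rule finite_subset[OF _ finite_permutations[OF f]]) auto
  ultimately show ?thesis by (auto simp: card_gt_0_iff)
qed

lemma F_s0: assumes "2 \<le> k" "k \<le> n"
  shows "card (Tset n (s0 k)) = card (good n k) * card (Cent {1..n} (s0 k))"
proof -
  let ?s = "s0 k"
  let ?f = "\<lambda>t. t \<circ> ?s \<circ> inv t"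
  have sp: "?s permutes {1..n}" using s0_perm[OF assms] .
  have fibers: "card {t\<in>Tset n ?s. ?f t = u} = card (Cent {1..n} ?s)" if "u \<in> ?f ` Tset n ?s" for u
  proof -
    from that obtain t0 where t0: "t0 \<in> Tset n ?s" "u = ?f t0" by (rule imageE) simp
    have t0p: "t0 permutes {1..n}" using t0(1) unfolding Tset_def by blast
    have "{t\<in>Tset n ?s. ?f t = u} = {t. t permutes {1..n} \<and> ?f t = ?f t0}"
    proof (intro set_eqI iffI)
      fix t assume "t \<in> {t\<in>Tset n ?s. ?f t = u}" then show "t \<in> {t. t permutes {1..n} \<and> ?f t = ?f t0}"
        using t0 unfolding Tset_def by auto
    next
      fix t assume t: "t \<in> {t. t permutes {1..n} \<and> ?f t = ?f t0}"
      then have tp: "t permutes {1..n}" by blast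
      have "?s \<circ> t \<circ> inv ?s \<circ> inv t = ?s \<circ> inv (?f t)" using comm_eq[OF sp tp] .
      also have "\<dots> = ?s \<circ> inv (?f t0)" using t by simp
      also have "\<dots> = ?s \<circ> t0 \<circ> inv ?s \<circ> inv t0" using comm_eq[OF sp t0p] by simp
      finally have "is_k_cycle 3 (?s \<circ> t \<circ> inv ?s \<circ> inv t)" using t0(1) unfolding Tset_def by simp
      then show "t \<in> {t\<in>Tset n ?s. ?f t = u}" using tp t t0(2) unfolding Tset_def by simp
    qed
    then show ?thesis using fiber_card[OF sp t0p] by simp
  qed
  have img: "?f ` Tset n ?s = (\<lambda>c. c \<circ> ?s) ` good n k"
  proof
    show "?f ` Tset n ?s \<subseteq> (\<lambda>c. c \<circ> ?s) ` good n k"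
    proof
      fix u assume "u \<in> ?f ` Tset n ?s"
      then obtain t where t: "t permutes {1..n}" "is_k_cycle 3 (?s \<circ> t \<circ> inv ?s \<circ> inv t)" "u = ?f t"
        unfolding Tset_def by blast
      have up: "u permutes {1..n}" using t(1,3) sp permutes_compose permutes_inv by metis
      define c where "c = u \<circ> inv ?s"
      have cp: "c permutes {1..n}" unfolding c_def using up sp permutes_compose permutes_inv by metis
      have cs: "c \<circ> ?s = u" unfolding c_def using permutes_inv_o(2)[OF sp] by (metis comp_assoc comp_id)
      have "inv c = ?s \<circ> inv u" unfolding c_def
        using inv_comp_perm[OF up permutes_inv[OF sp]] permutes_inv_inv[OF sp] by simp
      also have "\<dots> = ?s \<circ> t \<circ> inv ?s \<circ> inv t" using comm_eq[OF sp t(1)] t(3) by simp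
      finally have "is_k_cycle 3 (inv (inv c))" using inv3 t(2) by simp
      then have c3: "is_k_cycle 3 c" using permutes_inv_inv[OF cp] by simp
      have "is_k_cycle k (c \<circ> ?s)" using cs t(3) kcyc_conj[OF permutes_bij[OF t(1)] s0_kcyc[OF assms(1)]] by simp
      then have "c \<in> good n k" using cp c3 unfolding good_def by blast
      then show "u \<in> (\<lambda>c. c \<circ> ?s) ` good n k" using cs by blast
    qed
    show "(\<lambda>c. c \<circ> ?s) ` good n k \<subseteq> ?f ` Tset n ?s"
    proof
      fix u assume "u \<in> (\<lambda>c. c \<circ> ?s) ` good n k"
      then obtain c where c: "c permutes {1..n}" "is_k_cycle 3 c" "is_k_cycle k (c \<circ> ?s)" "u = c \<circ> ?s"
        unfolding good_def by blast
      have "u permutes {1..n}" using c(1,4) sp permutes_compose by metis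
      then have "u \<in> Kc n k" using c(3,4) unfolding Kc_def by blast
      then obtain g where g: "g permutes {1..n}" "u = ?f g" using K_eq[OF assms] by blast
      have "?s \<circ> g \<circ> inv ?s \<circ> inv g = ?s \<circ> inv u" using comm_eq[OF sp g(1)] g(2) by simp
      also have "\<dots> = ?s \<circ> (inv ?s \<circ> inv c)" using c(4) inv_comp_perm[OF c(1) sp] by simp
      also have "\<dots> = inv c" using permutes_inv_o(1)[OF sp] by (simp add: o_assoc)
      finally have "is_k_cycle 3 (?s \<circ> g \<circ> inv ?s \<circ> inv g)" using inv3[OF c(2)] by simp
      then have "g \<in> Tset n ?s" using g(1) unfolding Tset_def by blast
      then show "u \<in> ?f ` Tset n ?s" using g(2) by blast
    qed
  qed
  have inj: "inj_on (\<lambda>c. c \<circ> ?s) (good n k)"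
  proof (rule inj_onI)
    fix c1 c2 assume "c1 \<circ> ?s = c2 \<circ> ?s"
    then have "c1 \<circ> ?s \<circ> inv ?s = c2 \<circ> ?s \<circ> inv ?s" by simp
    then show "c1 = c2" using permutes_inv_o(1)[OF sp] by (metis comp_assoc comp_id)
  qed
  have "card (Tset n ?s) = card (?f ` Tset n ?s) * card (Cent {1..n} ?s)"
    by (rule card_fibers[OF Tset_fin fibers])
  also have "card (?f ` Tset n ?s) = card (good n k)" unfolding img by (rule card_image[OF inj])
  finally show ?thesis .
qed

lemma sumK: assumes "2 \<le> k" "k \<le> n"
  shows "(\<Sum>u\<in>Kc n k. card (Tset n u)) = fact n * card (good n k)"
proof -
  let ?s = "s0 k"
  let ?f = "\<lambda>g. g \<circ> ?s \<circ> inv g"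
  let ?P = "{g. g permutes {1..n}}"
  let ?C = "card (Cent {1..n} ?s)"
  have sp: "?s permutes {1..n}" using s0_perm[OF assms] .
  have fP: "finite ?P" by (rule finite_permutations) simp
  have cP: "card ?P = fact n" using card_permutations[of "{1..n}" n] by simp
  have "(\<Sum>g\<in>?P. card (Tset n (?f g))) = (\<Sum>u\<in>?f ` ?P. \<Sum>g\<in>{g\<in>?P. ?f g = u}. card (Tset n (?f g)))"
    by (rule sum.image_gen[OF fP])
  also have "\<dots> = (\<Sum>u\<in>?f ` ?P. ?C * card (Tset n u))"
  proof (rule sum.cong[OF refl])
    fix u assume "u \<in> ?f ` ?P"
    then obtain g0 where g0: "g0 permutes {1..n}" "u = ?f g0" by blast
    have se: "{g\<in>?P. ?f g = u} = {g. g permutes {1..n} \<and> ?f g = ?f g0}" using g0 by simp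
    have "(\<Sum>g\<in>{g\<in>?P. ?f g = u}. card (Tset n (?f g))) = (\<Sum>g\<in>{g\<in>?P. ?f g = u}. card (Tset n u))"
      by (rule sum.cong) auto
    also have "\<dots> = card {g\<in>?P. ?f g = u} * card (Tset n u)" by simp
    also have "card {g\<in>?P. ?f g = u} = ?C" unfolding se by (rule fiber_card[OF sp g0(1)])
    finally show "(\<Sum>g\<in>{g\<in>?P. ?f g = u}. card (Tset n (?f g))) = ?C * card (Tset n u)" .
  qed
  also have "\<dots> = ?C * (\<Sum>u\<in>Kc n k. card (Tset n u))"
    unfolding K_eq[OF assms] by (simp add: sum_distrib_left)
  finally have A: "(\<Sum>g\<in>?P. card (Tset n (?f g))) = ?C * (\<Sum>u\<in>Kc n k. card (Tset n u))" .
  have "(\<Sum>g\<in>?P. card (Tset n (?f g))) = (\<Sum>g\<in>?P. card (Tset n ?s))"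
    using F_eq[OF _ sp] by (intro sum.cong) auto
  also have "\<dots> = fact n * (card (good n k) * ?C)" using cP F_s0[OF assms] by simp
  also have "\<dots> = ?C * (fact n * card (good n k))" by (simp only: ac_simps)
  finally have B: "(\<Sum>g\<in>?P. card (Tset n (?f g))) = ?C * (fact n * card (good n k))" .
  have "?C * (\<Sum>u\<in>Kc n k. card (Tset n u)) = ?C * (fact n * card (good n k))"
    by (rule trans[OF A[symmetric] B])
  moreover have "0 < ?C" by (rule Cent_pos) simp
  ultimately show ?thesis by (metis mult_left_cancel neq0_conv)
qed



definition T2 :: "nat \<Rightarrow> (nat \<times> nat) set" where
  "T2 k = {(p,q). 1 \<le> p \<and> p < q \<and> q \<le> k}"

lemma T2_fin: "finite (T2 k)"
proof -
  have "T2 k \<subseteq> {1..k} \<times> {1..k}" unfolding T2_def by auto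
  then show ?thesis by (rule finite_subset) simp
qed

lemma T2_card: "real (card (T2 k)) = real k * (real k - 1) / 2"
proof (induction k)
  case 0
  have "T2 0 = {}" unfolding T2_def by auto
  then show ?case by simp
next
  case (Suc k)
  have e: "T2 (Suc k) = T2 k \<union> (\<lambda>p. (p, Suc k)) ` {1..k}" unfolding T2_def by auto
  have d: "T2 k \<inter> (\<lambda>p. (p, Suc k)) ` {1..k} = {}" unfolding T2_def by auto
  have "card (T2 (Suc k)) = card (T2 k) + card ((\<lambda>p. (p, Suc k)) ` {1..k})"
    unfolding e by (rule card_Un_disjoint[OF T2_fin _ d]) simp
  also have "card ((\<lambda>p. (p, Suc k)) ` {1..k}) = k" by (subst card_image) (auto simp: inj_on_def)
  finally have "real (card (T2 (Suc k))) = real (card (T2 k)) + real k" by simp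
  then show ?case using Suc.IH by (simp add: field_simps)
qed

lemma T3_card: "real (card (T3 k)) = real k * (real k - 1) * (real k - 2) / 6"
proof (induction k)
  case 0
  have "T3 0 = {}" unfolding T3_def by auto
  then show ?case by simp
next
  case (Suc k)
  have e: "T3 (Suc k) = T3 k \<union> (\<lambda>(p,q). (p, q, Suc k)) ` T2 k"
  proof (intro set_eqI iffI)
    fix x assume "x \<in> T3 (Suc k)"
    then obtain p q r where x: "x = (p,q,r)" "1 \<le> p" "p < q" "q < r" "r \<le> Suc k" unfolding T3_def by auto
    show "x \<in> T3 k \<union> (\<lambda>(p,q). (p, q, Suc k)) ` T2 k"
    proof (cases "r = Suc k")
      case True
      then have "(p,q) \<in> T2 k" unfolding T2_def using x by auto
      then show ?thesis using x True by force
    next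
      case False then show ?thesis using x unfolding T3_def by auto
    qed
  next
    fix x assume "x \<in> T3 k \<union> (\<lambda>(p,q). (p, q, Suc k)) ` T2 k"
    then show "x \<in> T3 (Suc k)" unfolding T3_def T2_def by auto
  qed
  have d: "T3 k \<inter> (\<lambda>(p,q). (p, q, Suc k)) ` T2 k = {}" unfolding T3_def T2_def by auto
  have "card (T3 (Suc k)) = card (T3 k) + card ((\<lambda>(p,q). (p, q, Suc k)) ` T2 k)"
    unfolding e by (rule card_Un_disjoint[OF T3_fin _ d]) (simp add: T2_fin)
  also have "card ((\<lambda>(p,q). (p, q, Suc k)) ` T2 k) = card (T2 k)" by (subst card_image) (auto simp: inj_on_def)
  finally have "real (card (T3 (Suc k))) = real (card (T3 k)) + real (card (T2 k))" by simp
  then show ?case using Suc.IH T2_card[of k] by (simp add: field_simps)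
qed

lemma sum_closed: "(\<Sum>k\<in>{2..Suc m}. real k * (real k - 1) * (real k - 2) / 6 + real k * (N - real k))
   = (real m + 2) * (real m + 1) * real m * (real m - 1) / 24
     + N * ((real m + 1) * (real m + 2) / 2 - 1) - ((real m + 1) * (real m + 2) * (2 * real m + 3) / 6 - 1)"
proof (induction m)
  case 0 then show ?case by simp
next
  case (Suc m)
  have "{2..Suc (Suc m)} = insert (Suc (Suc m)) {2..Suc m}" by (rule atLeastAtMostSuc_conv) simp
  then have "(\<Sum>k\<in>{2..Suc (Suc m)}. real k * (real k - 1) * (real k - 2) / 6 + real k * (N - real k))
     = (real (Suc (Suc m)) * (real (Suc (Suc m)) - 1) * (real (Suc (Suc m)) - 2) / 6 + real (Suc (Suc m)) * (N - real (Suc (Suc m))))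
       + (\<Sum>k\<in>{2..Suc m}. real k * (real k - 1) * (real k - 2) / 6 + real k * (N - real k))"
    by simp
  then show ?case using Suc.IH by (simp add: field_simps)
qed



theorem mainTheorem9:
  fixes n :: nat
  assumes "n > 2"
  shows "real (card {(s, t). s permutes {1..n} \<and> t permutes {1..n} \<and>
                   (\<exists>k\<in>{2..n}. is_k_cycle k s) \<and>
                   is_k_cycle 3 (s \<circ> t \<circ> inv s \<circ> inv t)})
         = (real n - 1) * (real n - 2) * ((real n)\<^sup>2 + 5 * real n + 12) * fact n / 24"
proof -
  let ?M = "{(s, t). s permutes {1..n} \<and> t permutes {1..n} \<and>
                   (\<exists>k\<in>{2..n}. is_k_cycle k s) \<and>
                   is_k_cycle 3 (s \<circ> t \<circ> inv s \<circ> inv t)}"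
  let ?A = "\<lambda>k. Sigma (Kc n k) (Tset n)"
  have Meq: "?M = (\<Union>k\<in>{2..n}. ?A k)"
    unfolding Kc_def Tset_def by auto
  have finK: "finite (Kc n k)" for k
    unfolding Kc_def by (rule finite_subset[OF _ finite_permutations[of "{1..n}"]]) auto
  have finA: "\<forall>k\<in>{2..n}. finite (?A k)" using finK Tset_fin by auto
  have disj: "\<forall>i\<in>{2..n}. \<forall>j\<in>{2..n}. i \<noteq> j \<longrightarrow> ?A i \<inter> ?A j = {}"
  proof (intro ballI impI)
    fix i j assume i: "i \<in> {2..n}" and j: "j \<in> {2..n}" and ij: "i \<noteq> j"
    { fix s t assume "(s,t) \<in> ?A i" "(s,t) \<in> ?A j"
      then have "is_k_cycle i s" "is_k_cycle j s" unfolding Kc_def by auto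
      then have "i = j" using kcyc_unique i j by auto
      with ij have False by simp }
    then show "?A i \<inter> ?A j = {}" by auto
  qed
  have "card ?M = (\<Sum>k\<in>{2..n}. card (?A k))"
    unfolding Meq by (rule card_UN_disjoint[OF _ finA disj]) simp
  also have "\<dots> = (\<Sum>k\<in>{2..n}. fact n * (card (T3 k) + k * (n - k)))"
  proof (rule sum.cong[OF refl])
    fix k assume k: "k \<in> {2..n}"
    have "card (?A k) = (\<Sum>u\<in>Kc n k. card (Tset n u))" using finK Tset_fin by simp
    also have "\<dots> = fact n * card (good n k)" using sumK k by auto
    also have "card (good n k) = card (T3 k) + k * (n - k)" using good_card k by auto
    finally show "card (?A k) = fact n * (card (T3 k) + k * (n - k))" .
  qed
  finally have C: "real (card ?M) = (\<Sum>k\<in>{2..n}. real (fact n) * (real (card (T3 k)) + real k * (real n - real k)))"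
    by (simp add: of_nat_diff)
  obtain m where m: "n = Suc m" using assms by (cases n) auto
  have nm: "{2..n} = {2..Suc m}" using m by simp
  have "(\<Sum>k\<in>{2..n}. real (fact n) * (real (card (T3 k)) + real k * (real n - real k)))
     = real (fact n) * (\<Sum>k\<in>{2..n}. real k * (real k - 1) * (real k - 2) / 6 + real k * (real n - real k))"
    by (simp add: sum_distrib_left T3_card)
  also have "\<dots> = real (fact n) * ((real m + 2) * (real m + 1) * real m * (real m - 1) / 24
     + real n * ((real m + 1) * (real m + 2) / 2 - 1) - ((real m + 1) * (real m + 2) * (2 * real m + 3) / 6 - 1))"
    by (simp only: nm sum_closed)
  also have "\<dots> = (real n - 1) * (real n - 2) * ((real n)\<^sup>2 + 5 * real n + 12) * fact n / 24"
    unfolding m by (simp add: field_simps power2_eq_square)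
  finally show ?thesis using C by simp
qed


end
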